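(* Let $P$ be a finite ranked poset with rank function $\mathrm{rk}$. Let $R_1$ and $R_2$ be restriction functions on $P$ related by $R_1(p)=\{k+\mathrm{rk}(p):k\in R_2(p)\}$ for all $p\in P$. Then $R_1$ is consistent if and only if $R_2$ is weakly-consistent. Moreover, in this case $\Gamma(P,R_1)$ is isomorphic to $\Gamma'(P,R_2)$.
   Context: $P$ is ranked with rank function $\mathrm{rk}:P\to\mathbb{Z}$ if $x\lessdot y$ implies $\mathrm{rk}(y)=\mathrm{rk}(x)+1$. A restriction function assigns to each $p$ a nonempty finite subset of $\mathbb{Z}$. $R$ is consistent (resp. weakly-consistent) if for every cover $x\lessdot y$, $\min R(x)<\min R(y)$ and $\max R(x)<\max R(y)$ (resp. with $\le$ in place of $<$). $R(p)^*=R(p)\setminus\{\max R(p)\}$; $R(p)_{>k}$ is the smallest element of $R(p)$ greater than $k$; $R(p)_{<k}$ (resp. $R(p)_{\le k}$) is the largest element of $R(p)$ less than (resp. at most) $k$. $\Gamma(P,R)$ (for consistent $R$) is the poset on $\{(p,k):k\in R(p)^*\}$ whose order is the reflexive–transitive closure of: $(p_1,k_1)\lessdot(p_2,k_2)$ iff (1) $p_1=p_2$ and $R(p_1)_{>k_2}=k_1$, or (2) $p_1\lessdot p_2$, $k_1=R(p_1)_{<k_2}$, $k_1\ne\max R(p_1)$, and no $k\in R(p_2)$, $k>k_2$, has $R(p_1)_{<k}=k_1$. $\Gamma'(P,R)$ (for weakly-consistent $R$) is defined on the same kind of set by: (1) $p_1=p_2$ and $R(p_1)_{>k_2}=k_1$,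 or (2) $p_1\lessdot p_2$, $R(p_1)_{\le k_2}=k_1$, and no $k\in R(p_2)$, $k>k_2$, has $R(p_1)_{\le k}=k_1$. *)

theory Defs
  imports Main
begin

definition poset_on :: "'a set \<Rightarrow> ('a \<Rightarrow> 'a \<Rightarrow> bool) \<Rightarrow> bool" where
  "poset_on P le \<longleftrightarrow>
     (\<forall>x\<in>P. le x x) \<and>
     (\<forall>x\<in>P. \<forall>y\<in>P. le x y \<and> le y x \<longrightarrow> x = y) \<and>
     (\<forall>x\<in>P. \<forall>y\<in>P. \<forall>z\<in>P. le x y \<and> le y z \<longrightarrow> le x z)"

definition covers :: "'a set \<Rightarrow> ('a \<Rightarrow> 'a \<Rightarrow> bool) \<Rightarrow> 'a \<Rightarrow> 'a \<Rightarrow> bool" where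
  "covers P le x y \<longleftrightarrow> x \<in> P \<and> y \<in> P \<and> le x y \<and> x \<noteq> y \<and>
     \<not> (\<exists>z\<in>P. le x z \<and> le z y \<and> z \<noteq> x \<and> z \<noteq> y)"

definition ranked :: "'a set \<Rightarrow> ('a \<Rightarrow> 'a \<Rightarrow> bool) \<Rightarrow> ('a \<Rightarrow> int) \<Rightarrow> bool" where
  "ranked P le rk \<longleftrightarrow> (\<forall>x y. covers P le x y \<longrightarrow> rk y = rk x + 1)"

definition restriction_fun :: "'a set \<Rightarrow> ('a \<Rightarrow> int set) \<Rightarrow> bool" where
  "restriction_fun P R \<longleftrightarrow> (\<forall>p\<in>P. R p \<noteq> {} \<and> finite (R p))"

definition consistent :: "'a set \<Rightarrow> ('a \<Rightarrow> 'a \<Rightarrow> bool) \<Rightarrow> ('a \<Rightarrow> int set) \<Rightarrow> bool" where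
  "consistent P le R \<longleftrightarrow> (\<forall>x y. covers P le x y \<longrightarrow>
      Min (R x) < Min (R y) \<and> Max (R x) < Max (R y))"

definition weakly_consistent :: "'a set \<Rightarrow> ('a \<Rightarrow> 'a \<Rightarrow> bool) \<Rightarrow> ('a \<Rightarrow> int set) \<Rightarrow> bool" where
  "weakly_consistent P le R \<longleftrightarrow> (\<forall>x y. covers P le x y \<longrightarrow>
      Min (R x) \<le> Min (R y) \<and> Max (R x) \<le> Max (R y))"

text \<open>Partial operations on finite sets of integers, expressed as predicates:
  next_gt S k m  means  S_{>k} = m  (m is the smallest element of S greater than k);
  prev_lt S k m  means  S_{<k} = m;  prev_le S k m  means  S_{\<le>k} = m.\<close>
definition next_gt :: "int set \<Rightarrow> int \<Rightarrow> int \<Rightarrow> bool" where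
  "next_gt S k m \<longleftrightarrow> m \<in> S \<and> k < m \<and> (\<forall>x\<in>S. k < x \<longrightarrow> m \<le> x)"

definition prev_lt :: "int set \<Rightarrow> int \<Rightarrow> int \<Rightarrow> bool" where
  "prev_lt S k m \<longleftrightarrow> m \<in> S \<and> m < k \<and> (\<forall>x\<in>S. x < k \<longrightarrow> x \<le> m)"

definition prev_le :: "int set \<Rightarrow> int \<Rightarrow> int \<Rightarrow> bool" where
  "prev_le S k m \<longleftrightarrow> m \<in> S \<and> m \<le> k \<and> (\<forall>x\<in>S. x \<le> k \<longrightarrow> x \<le> m)"

definition gamma_set :: "'a set \<Rightarrow> ('a \<Rightarrow> int set) \<Rightarrow> ('a \<times> int) set" where
  "gamma_set P R = {(p, k). p \<in> P \<and> k \<in> R p - {Max (R p)}}"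

definition gamma_cov :: "'a set \<Rightarrow> ('a \<Rightarrow> 'a \<Rightarrow> bool) \<Rightarrow> ('a \<Rightarrow> int set)
    \<Rightarrow> 'a \<times> int \<Rightarrow> 'a \<times> int \<Rightarrow> bool" where
  "gamma_cov P le R a b \<longleftrightarrow> a \<in> gamma_set P R \<and> b \<in> gamma_set P R \<and>
     (let (p1, k1) = a; (p2, k2) = b in
       (p1 = p2 \<and> next_gt (R p1) k2 k1) \<or>
       (covers P le p1 p2 \<and> prev_lt (R p1) k2 k1 \<and> k1 \<noteq> Max (R p1) \<and>
        \<not> (\<exists>k\<in>R p2. k > k2 \<and> prev_lt (R p1) k k1)))"

definition gamma'_cov :: "'a set \<Rightarrow> ('a \<Rightarrow> 'a \<Rightarrow> bool) \<Rightarrow> ('a \<Rightarrow> int set)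
    \<Rightarrow> 'a \<times> int \<Rightarrow> 'a \<times> int \<Rightarrow> bool" where
  "gamma'_cov P le R a b \<longleftrightarrow> a \<in> gamma_set P R \<and> b \<in> gamma_set P R \<and>
     (let (p1, k1) = a; (p2, k2) = b in
       (p1 = p2 \<and> next_gt (R p1) k2 k1) \<or>
       (covers P le p1 p2 \<and> prev_le (R p1) k2 k1 \<and>
        \<not> (\<exists>k\<in>R p2. k > k2 \<and> prev_le (R p1) k k1)))"

definition gamma_le :: "'a set \<Rightarrow> ('a \<Rightarrow> 'a \<Rightarrow> bool) \<Rightarrow> ('a \<Rightarrow> int set)
    \<Rightarrow> 'a \<times> int \<Rightarrow> 'a \<times> int \<Rightarrow> bool" where
  "gamma_le P le R = (gamma_cov P le R)\<^sup>*\<^sup>*"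

definition gamma'_le :: "'a set \<Rightarrow> ('a \<Rightarrow> 'a \<Rightarrow> bool) \<Rightarrow> ('a \<Rightarrow> int set)
    \<Rightarrow> 'a \<times> int \<Rightarrow> 'a \<times> int \<Rightarrow> bool" where
  "gamma'_le P le R = (gamma'_cov P le R)\<^sup>*\<^sup>*"

definition poset_iso :: "'b set \<Rightarrow> ('b \<Rightarrow> 'b \<Rightarrow> bool) \<Rightarrow> 'c set \<Rightarrow> ('c \<Rightarrow> 'c \<Rightarrow> bool) \<Rightarrow> bool" where
  "poset_iso A leA B leB \<longleftrightarrow> (\<exists>f. bij_betw f A B \<and>
      (\<forall>x\<in>A. \<forall>y\<in>A. leA x y \<longleftrightarrow> leB (f x) (f y)))"

end

theory Submission
  imports Defs
begin

lemma shift_mem: "x \<in> (\<lambda>k. k + c) ` S \<longleftrightarrow> x - c \<in> (S::int set)"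
  by (auto simp: image_iff) (metis diff_add_cancel)

lemma shift_Max: "finite (S::int set) \<Longrightarrow> S \<noteq> {} \<Longrightarrow> Max ((\<lambda>k. k + c) ` S) = Max S + c"
  by (rule Max_eqI) auto

lemma shift_Min: "finite (S::int set) \<Longrightarrow> S \<noteq> {} \<Longrightarrow> Min ((\<lambda>k. k + c) ` S) = Min S + c"
  by (rule Min_eqI) auto

lemma shift_next_gt: "next_gt ((\<lambda>k. k + c) ` S) k m \<longleftrightarrow> next_gt S (k - c) (m - c)"
  unfolding next_gt_def shift_mem by (auto simp: image_iff)

lemma shift_prev_lt: "prev_lt ((\<lambda>k. k + c) ` S) k m \<longleftrightarrow> prev_le S (k - c - 1) (m - c)"
  unfolding prev_lt_def prev_le_def shift_mem by (auto simp: image_iff)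

lemma rtr_transfer:
  assumes "\<And>a b. s (f a) (f b) \<longleftrightarrow> r a b" "\<And>c. f (g c) = c" "\<And>c. g (f c) = c"
  shows "r\<^sup>*\<^sup>* a b \<longleftrightarrow> s\<^sup>*\<^sup>* (f a) (f b)"
proof
  assume "r\<^sup>*\<^sup>* a b" thus "s\<^sup>*\<^sup>* (f a) (f b)"
    by (induction rule: rtranclp_induct) (auto simp: assms intro: rtranclp.rtrancl_into_rtrancl)
next
  have gen: "r\<^sup>*\<^sup>* (g c) (g d)" if "s\<^sup>*\<^sup>* c d" for c d
    using that
  proof (induction rule: rtranclp_induct)
    case (step y z)
    have "r (g y) (g z)" using assms step(2) by metis
    thus ?case using step(3) by (auto intro: rtranclp.rtrancl_into_rtrancl)
  qed auto
  assume "s\<^sup>*\<^sup>* (f a) (f b)"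
  from gen[OF this] show "r\<^sup>*\<^sup>* a b" by (simp add: assms)
qed

theorem theorem2p26:
  fixes P :: "'a set" and le :: "'a \<Rightarrow> 'a \<Rightarrow> bool" and rk :: "'a \<Rightarrow> int"
    and R1 R2 :: "'a \<Rightarrow> int set"
  assumes "finite P" and "poset_on P le" and "ranked P le rk"
    and "restriction_fun P R1" and "restriction_fun P R2"
    and "\<forall>p\<in>P. R1 p = (\<lambda>k. k + rk p) ` R2 p"
  shows "(consistent P le R1 \<longleftrightarrow> weakly_consistent P le R2) \<and>
    (consistent P le R1 \<longrightarrow>
       poset_iso (gamma_set P R1) (gamma_le P le R1) (gamma_set P R2) (gamma'_le P le R2))"
proof
  have R: "R1 p = (\<lambda>k. k + rk p) ` R2 p" if "p \<in> P" for p using assms(6) that by blast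
  have fne: "finite (R2 p)" "R2 p \<noteq> {}" if "p \<in> P" for p
    using assms(5) that unfolding restriction_fun_def by auto
  have cov: "p \<in> P \<and> q \<in> P \<and> rk q = rk p + 1" if "covers P le p q" for p q
    using that assms(3) unfolding covers_def ranked_def by auto
  show "consistent P le R1 \<longleftrightarrow> weakly_consistent P le R2"
    unfolding consistent_def weakly_consistent_def
  proof (intro iff_allI imp_cong[OF refl])
    fix x y assume c: "covers P le x y"
    then have "x \<in> P" "y \<in> P" "rk y = rk x + 1" using cov by auto
    then show "(Min (R1 x) < Min (R1 y) \<and> Max (R1 x) < Max (R1 y)) =
           (Min (R2 x) \<le> Min (R2 y) \<and> Max (R2 x) \<le> Max (R2 y))"
      using R fne shift_Max shift_Min by (simp)
  qed
  show "consistent P le R1 \<longrightarrow>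
       poset_iso (gamma_set P R1) (gamma_le P le R1) (gamma_set P R2) (gamma'_le P le R2)"
  proof
    define f where "f = (\<lambda>(p, k). (p, k - rk p))"
    define g where "g = (\<lambda>(p, k). (p, k + rk p))"
    have fg: "f (g c) = c" "g (f c) = c" for c
      unfolding f_def g_def by (cases c, simp)+
    have gs: "f a \<in> gamma_set P R2 \<longleftrightarrow> a \<in> gamma_set P R1" for a
    proof (cases a)
      case (Pair p k)
      show ?thesis
      proof (cases "p \<in> P")
        case True
        then show ?thesis using R[OF True] fne[OF True] shift_Max[of "R2 p" "rk p"]
          by (auto simp: Pair f_def gamma_set_def shift_mem)
      qed (auto simp: Pair f_def gamma_set_def)
    qed
    have cv: "gamma'_cov P le R2 (f a) (f b) \<longleftrightarrow> gamma_cov P le R1 a b" for a b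
    proof (cases "a \<in> gamma_set P R1 \<and> b \<in> gamma_set P R1")
      case False
      then show ?thesis unfolding gamma_cov_def gamma'_cov_def gs by auto
    next
      case True
      obtain p1 k1 p2 k2 where ab: "a = (p1, k1)" "b = (p2, k2)" by (cases a, cases b) auto
      have p1: "p1 \<in> P" and p2: "p2 \<in> P" and k1: "k1 \<noteq> Max (R1 p1)"
        using True ab unfolding gamma_set_def by auto
      have A: "(p1 = p2 \<and> next_gt (R1 p1) k2 k1) \<longleftrightarrow>
          (p1 = p2 \<and> next_gt (R2 p1) (k2 - rk p2) (k1 - rk p1))"
        using R[OF p1] shift_next_gt by auto
      have B: "(covers P le p1 p2 \<and> prev_lt (R1 p1) k2 k1 \<and> k1 \<noteq> Max (R1 p1) \<and>
        \<not> (\<exists>k\<in>R1 p2. k > k2 \<and> prev_lt (R1 p1) k k1)) \<longleftrightarrow>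
        (covers P le p1 p2 \<and> prev_le (R2 p1) (k2 - rk p2) (k1 - rk p1) \<and>
        \<not> (\<exists>k\<in>R2 p2. k > k2 - rk p2 \<and> prev_le (R2 p1) k (k1 - rk p1)))"
      proof (cases "covers P le p1 p2")
        case c: True
        then have r: "rk p2 = rk p1 + 1" using cov by auto
        have e1: "prev_lt (R1 p1) k2 k1 \<longleftrightarrow> prev_le (R2 p1) (k2 - rk p2) (k1 - rk p1)"
          using R[OF p1] shift_prev_lt[of "rk p1" "R2 p1" k2 k1] r by (simp add: algebra_simps)
        have e2: "(\<exists>k\<in>R1 p2. k > k2 \<and> prev_lt (R1 p1) k k1) \<longleftrightarrow>
            (\<exists>k\<in>R2 p2. k > k2 - rk p2 \<and> prev_le (R2 p1) k (k1 - rk p1))"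
        proof
          assume "\<exists>k\<in>R1 p2. k > k2 \<and> prev_lt (R1 p1) k k1"
          then obtain k where "k \<in> R1 p2" "k > k2" "prev_lt (R1 p1) k k1" by blast
          then show "\<exists>k\<in>R2 p2. k > k2 - rk p2 \<and> prev_le (R2 p1) k (k1 - rk p1)"
            using R[OF p1] R[OF p2] shift_prev_lt[of "rk p1" "R2 p1" k k1] r
            by (intro bexI[of _ "k - rk p2"]) (auto simp: shift_mem algebra_simps)
        next
          assume "\<exists>k\<in>R2 p2. k > k2 - rk p2 \<and> prev_le (R2 p1) k (k1 - rk p1)"
          then obtain k where "k \<in> R2 p2" "k > k2 - rk p2" "prev_le (R2 p1) k (k1 - rk p1)" by blast
          then show "\<exists>k\<in>R1 p2. k > k2 \<and> prev_lt (R1 p1) k k1"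
            using R[OF p1] R[OF p2] shift_prev_lt[of "rk p1" "R2 p1" "k + rk p2" k1] r
            by (intro bexI[of _ "k + rk p2"]) (auto simp: algebra_simps)
        qed
        show ?thesis using e1 e2 k1 by blast
      qed simp
      show ?thesis unfolding gamma_cov_def gamma'_cov_def gs using True A B
        by (simp add: ab f_def)
    qed
    have le: "gamma_le P le R1 a b \<longleftrightarrow> gamma'_le P le R2 (f a) (f b)" for a b
      unfolding gamma_le_def gamma'_le_def by (rule rtr_transfer[where s="gamma'_cov P le R2" and f=f and g=g, OF cv fg])
    have "bij_betw f (gamma_set P R1) (gamma_set P R2)"
      by (rule bij_betw_byWitness[where f'=g]) (use fg gs in \<open>auto, metis\<close>)
    then show "poset_iso (gamma_set P R1) (gamma_le P le R1) (gamma_set P R2) (gamma'_le P le R2)"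
      unfolding poset_iso_def using le by blast
  qed
qed

end
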